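(* The sequence $(v_k)_{k\in\mathbb N}$ of represented tensors produced by the ALS method satisfies $\|v_{k+1}-v_k\|_A\to0$ as $k\to\infty$, where $\|v\|_A=\sqrt{\langle Av,v\rangle}$.
   Context: Let $\mathcal V=\bigotimes_{\nu=1}^d\mathbb R^{m_\nu}\cong\mathbb R^N$ with the Euclidean inner product $\langle\cdot,\cdot\rangle$. Let $A\in\mathbb R^{N\times N}$ be symmetric positive definite, $b\in\mathcal V\setminus\{0\}$, $f(v)=\frac{1}{\|b\|^2}(\frac12\langle Av,v\rangle-\langle b,v\rangle)$. Let $L\ge d$, $P_1,\dots,P_L$ finite-dimensional real inner product spaces, $P=P_1\times\dots\times P_L$, $U:P\to\mathcal V$ multilinear. For $\mathbf p\in P$, $W_{\mu,\mathbf p^{[\mu]}}:P_\mu\to\mathcal V$ is $q\mapsto U(p_1,\dots,p_{\mu-1},q,p_{\mu+1},\dots,p_L)$; $X^T$ transpose, $X^+$ pseudoinverse. ALS: choose $\mathbf p_1=(p_1^1,\dots,p_L^1)\in P$; for $k=1,2,\dots$ and $\mu=1,\dots,L$ in order, $W_{k,\mu}:=W_{\mu,(p_1^{k+1},\dots,p_{\mu-1}^{k+1},p_{\mu+1}^k,\dots,p_L^k)}$ and $p_\mu^{k+1}:=(W_{k,\mu}^TAW_{k,\mu})^+W_{k,\mu}^Tb$ (the minimum-norm minimiser of $q\mapsto f(U(p_1^{k+1},\dots,p_{\mu-1}^{k+1},q,p_{\mu+1}^k,\dots,p_L^k))$). Put $v_k=U(p_1^k,\dots,p_L^k)$. *)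

theory Defs
  imports "HOL-Analysis.Analysis"
begin

definition normA :: "real^'n^'n \<Rightarrow> real^'n \<Rightarrow> real" where
  "normA A v = sqrt ((A *v v) \<bullet> v)"

definition fobj :: "real^'n^'n \<Rightarrow> real^'n \<Rightarrow> real^'n \<Rightarrow> real" where
  "fobj A b v = (1 / (norm b)^2) * ((1/2) * ((A *v v) \<bullet> v) - b \<bullet> v)"

text \<open>Parameter tuples p = (p_1,...,p_L) are modelled as functions nat => 'b,
  where component mu lives in the subspace P mu (mu in 1..L) of the
  Euclidean space 'b.\<close>
definition in_params :: "nat \<Rightarrow> (nat \<Rightarrow> 'b set) \<Rightarrow> (nat \<Rightarrow> 'b) \<Rightarrow> bool" where
  "in_params L P p \<longleftrightarrow> (\<forall>\<nu>\<in>{1..L}. p \<nu> \<in> P \<nu>)"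

definition multilinear_on ::
  "nat \<Rightarrow> (nat \<Rightarrow> 'b::real_vector set) \<Rightarrow> ((nat \<Rightarrow> 'b) \<Rightarrow> 'c::real_vector) \<Rightarrow> bool" where
  "multilinear_on L P U \<longleftrightarrow>
     (\<forall>p p'. (\<forall>\<nu>\<in>{1..L}. p \<nu> = p' \<nu>) \<longrightarrow> U p = U p') \<and>
     (\<forall>\<mu>\<in>{1..L}. \<forall>p. in_params L P p \<longrightarrow>
        (\<forall>x\<in>P \<mu>. \<forall>y\<in>P \<mu>. \<forall>a b::real.
           U (p(\<mu> := a *\<^sub>R x + b *\<^sub>R y)) = a *\<^sub>R U (p(\<mu> := x)) + b *\<^sub>R U (p(\<mu> := y))))"

definition als_arg :: "(nat \<Rightarrow> 'b) \<Rightarrow> (nat \<Rightarrow> 'b) \<Rightarrow> nat \<Rightarrow> 'b \<Rightarrow> nat \<Rightarrow> 'b" where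
  "als_arg pnew pold \<mu> q = (\<lambda>\<nu>. if \<nu> < \<mu> then pnew \<nu> else if \<nu> = \<mu> then q else pold \<nu>)"

definition min_norm_minimiser :: "('b::real_normed_vector \<Rightarrow> real) \<Rightarrow> 'b set \<Rightarrow> 'b \<Rightarrow> bool" where
  "min_norm_minimiser g S x \<longleftrightarrow>
     x \<in> S \<and> (\<forall>q\<in>S. g x \<le> g q) \<and>
     (\<forall>y\<in>S. (\<forall>q\<in>S. g y \<le> g q) \<longrightarrow> norm x \<le> norm y)"

end

theory Submission
  imports Defs
begin
lemma Asym_dot: fixes A :: "real^'n^'n" assumes "transpose A = A"
  shows "(A *v x) \<bullet> y = (A *v y) \<bullet> x"
proof -
  have "x v* A = A *v x" by (metis assms transpose_matrix_vector)
  then show ?thesis by (metis dot_lmul_matrix inner_commute)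
qed

lemma fobj_expand: fixes A :: "real^'n^'n" assumes "transpose A = A"
  shows "fobj A b (X + t *\<^sub>R D) = fobj A b X
     + t * ((1/(norm b)^2) * ((A *v X) \<bullet> D - b \<bullet> D))
     + t^2 * ((1/(norm b)^2)/2 * ((A *v D) \<bullet> D))"
proof -
  have s: "(A *v D) \<bullet> X = (A *v X) \<bullet> D" using Asym_dot[OF assms] .
  have "(A *v (X + t *\<^sub>R D)) \<bullet> (X + t *\<^sub>R D) = (A *v X) \<bullet> X + 2*t*((A *v X) \<bullet> D) + t^2 * ((A *v D) \<bullet> D)"
    by (simp add: algebra_simps matrix_vector_mult_scaleR inner_add_left inner_add_right s power2_eq_square)
  moreover have "b \<bullet> (X + t *\<^sub>R D) = b \<bullet> X + t * (b \<bullet> D)" by (simp add: inner_add_right)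
  ultimately show ?thesis unfolding fobj_def s by (cases "norm b = 0") (simp_all add: field_simps power2_eq_square)
qed

lemma quad_zero: fixes a c :: real assumes "c \<ge> 0" "\<forall>t. a * t + c * t^2 \<ge> 0" shows "a = 0"
proof (rule ccontr)
  assume an: "a \<noteq> 0"
  have p: "c + 1 > 0" using assms(1) by simp
  define t where "t = - a / (c+1)"
  have e1: "a + c*t = a/(c+1)" using p by (simp add: t_def field_simps)
  have "a * t + c * t^2 = t * (a + c*t)" by (simp add: algebra_simps power2_eq_square)
  also have "\<dots> = t * (a/(c+1))" using e1 by simp
  also have "\<dots> = - (a*a) / ((c+1)*(c+1))" by (simp add: t_def)
  finally have eq: "a * t + c * t^2 = - (a*a) / ((c+1)*(c+1))" .
  have "a*a > 0" using an not_real_square_gt_zero by blast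
  moreover have "(c+1)*(c+1) > 0" using p by simp
  ultimately have "(a*a) / ((c+1)*(c+1)) > 0" by simp
  then have "a * t + c * t^2 < 0" unfolding eq by simp
  then show False using assms(2) by (meson not_le)
qed

lemma opt_gap: fixes A :: "real^'n^'n" assumes "transpose A = A" "(A *v D) \<bullet> D \<ge> 0"
  and "\<forall>t. fobj A b X \<le> fobj A b (X + t *\<^sub>R D)"
  shows "fobj A b (X + D) = fobj A b X + (1/(norm b)^2)/2 * ((A *v D) \<bullet> D)"
proof -
  let ?a = "(1/(norm b)^2) * ((A *v X) \<bullet> D - b \<bullet> D)"
  let ?c = "(1/(norm b)^2)/2 * ((A *v D) \<bullet> D)"
  have "\<forall>t. ?a * t + ?c * t^2 \<ge> 0"
    using assms(3) fobj_expand[OF assms(1), of b X] by (simp add: algebra_simps)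
  moreover have "?c \<ge> 0" using assms(2) by simp
  ultimately have "?a = 0" using quad_zero by blast
  then show ?thesis using fobj_expand[OF assms(1), of b X 1 D] by simp
qed
lemma als_arg_upd: "als_arg pnew pold \<mu> q = (als_arg pnew pold \<mu> x)(\<mu> := q)"
  by (auto simp: als_arg_def fun_eq_iff)

lemma micro:
  fixes A :: "real^'n^'n" and U :: "(nat \<Rightarrow> 'b::euclidean_space) \<Rightarrow> real^'n"
  assumes Asym: "transpose A = A" and Qnn: "\<forall>v. (A *v v) \<bullet> v \<ge> 0"
    and Psub: "\<forall>\<mu>\<in>{1..L}. subspace (P \<mu>)"
    and Umult: "multilinear_on L P U"
    and mu: "\<mu> \<in> {1..L}"
    and pn: "in_params L P pnew" and po: "in_params L P pold"
    and mn: "min_norm_minimiser (\<lambda>q. fobj A b (U (als_arg pnew pold \<mu> q))) (P \<mu>) (pnew \<mu>)"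
  shows "fobj A b (U (als_arg pnew pold \<mu> (pold \<mu>))) = fobj A b (U (als_arg pnew pold \<mu> (pnew \<mu>)))
     + (1/(norm b)^2)/2 * ((A *v (U (als_arg pnew pold \<mu> (pold \<mu>)) - U (als_arg pnew pold \<mu> (pnew \<mu>))))
          \<bullet> (U (als_arg pnew pold \<mu> (pold \<mu>)) - U (als_arg pnew pold \<mu> (pnew \<mu>))))"
proof -
  define x where "x = pnew \<mu>"
  define y where "y = pold \<mu>"
  define base where "base = als_arg pnew pold \<mu> x"
  define X where "X = U (als_arg pnew pold \<mu> x)"
  define Y where "Y = U (als_arg pnew pold \<mu> y)"
  have sub: "subspace (P \<mu>)" using Psub mu by blast
  have xP: "x \<in> P \<mu>" using pn mu unfolding in_params_def x_def by blast
  have yP: "y \<in> P \<mu>" using po mu unfolding in_params_def y_def by blast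
  have bp: "in_params L P base"
    unfolding in_params_def
  proof
    fix \<nu> assume nu: "\<nu> \<in> {1..L}"
    have "pnew \<nu> \<in> P \<nu>" "pold \<nu> \<in> P \<nu>" using pn po nu unfolding in_params_def by blast+
    then show "base \<nu> \<in> P \<nu>" using xP unfolding base_def als_arg_def by simp
  qed
  have ml: "\<And>x y a bb. x \<in> P \<mu> \<Longrightarrow> y \<in> P \<mu> \<Longrightarrow>
      U (base(\<mu> := a *\<^sub>R x + bb *\<^sub>R y)) = a *\<^sub>R U (base(\<mu> := x)) + bb *\<^sub>R U (base(\<mu> := y))"
  proof -
    have H: "\<forall>\<mu>\<in>{1..L}. \<forall>p. in_params L P p \<longrightarrow>
        (\<forall>x\<in>P \<mu>. \<forall>y\<in>P \<mu>. \<forall>a b::real.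
           U (p(\<mu> := a *\<^sub>R x + b *\<^sub>R y)) = a *\<^sub>R U (p(\<mu> := x)) + b *\<^sub>R U (p(\<mu> := y)))"
      using Umult unfolding multilinear_on_def by (rule conjunct2)
    fix x y a bb assume "x \<in> P \<mu>" "y \<in> P \<mu>"
    then show "U (base(\<mu> := a *\<^sub>R x + bb *\<^sub>R y)) = a *\<^sub>R U (base(\<mu> := x)) + bb *\<^sub>R U (base(\<mu> := y))"
      using H[rule_format, OF mu bp] by blast
  qed
  have bx: "base(\<mu> := x) = als_arg pnew pold \<mu> x" by (simp add: base_def als_arg_upd[symmetric])
  have by': "base(\<mu> := y) = als_arg pnew pold \<mu> y" unfolding base_def by (rule als_arg_upd[symmetric])
  have "\<forall>t. fobj A b X \<le> fobj A b (X + t *\<^sub>R (Y - X))"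
  proof
    fix t :: real
    have inP: "(1-t) *\<^sub>R x + t *\<^sub>R y \<in> P \<mu>"
      using sub xP yP by (simp add: subspace_add subspace_scale)
    have "U (als_arg pnew pold \<mu> ((1-t) *\<^sub>R x + t *\<^sub>R y)) = (1-t) *\<^sub>R X + t *\<^sub>R Y"
      using ml[OF xP yP, of "1-t" t] unfolding bx by' X_def Y_def base_def als_arg_upd[symmetric] .
    also have "\<dots> = X + t *\<^sub>R (Y - X)" by (simp add: algebra_simps)
    finally have e: "U (als_arg pnew pold \<mu> ((1-t) *\<^sub>R x + t *\<^sub>R y)) = X + t *\<^sub>R (Y - X)" .
    have "fobj A b X \<le> fobj A b (U (als_arg pnew pold \<mu> ((1-t) *\<^sub>R x + t *\<^sub>R y)))"
      using mn inP unfolding min_norm_minimiser_def X_def x_def by blast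
    then show "fobj A b X \<le> fobj A b (X + t *\<^sub>R (Y - X))" using e by simp
  qed
  from opt_gap[OF Asym _ this] Qnn have "fobj A b (X + (Y - X)) = fobj A b X + (1/(norm b)^2)/2 * ((A *v (Y - X)) \<bullet> (Y - X))"
    by blast
  then show ?thesis unfolding X_def Y_def x_def y_def by simp
qed
lemma A_surj: fixes A :: "real^'n^'n" assumes "\<forall>v. v \<noteq> 0 \<longrightarrow> (A *v v) \<bullet> v > 0"
  shows "\<exists>x. A *v x = b"
proof -
  have "inj (\<lambda>x. A *v x)"
  proof (rule linear_injective_0[THEN iffD2])
    show "linear ((*v) A)" by simp
    show "\<forall>x. A *v x = 0 \<longrightarrow> x = 0" using assms by force
  qed
  then have "surj (\<lambda>x. A *v x)" using linear_injective_imp_surjective by (metis matrix_vector_mul_linear)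
  then show ?thesis by (metis surjD)
qed
lemma Q_neg: fixes A :: "real^'n^'n" shows "(A *v (- x)) \<bullet> (- x) = (A *v x) \<bullet> x"
proof -
  have "A *v (- x) = - (A *v x)" by (simp add: vec_eq_iff matrix_vector_mult_def sum_negf)
  then show ?thesis by simp
qed

lemma Q_add: fixes A :: "real^'n^'n" assumes "transpose A = A" "\<forall>v. (A *v v) \<bullet> v \<ge> 0"
  shows "(A *v (x+y)) \<bullet> (x+y) \<le> 2 * ((A *v x) \<bullet> x) + 2 * ((A *v y) \<bullet> y)"
proof -
  have s: "(A *v y) \<bullet> x = (A *v x) \<bullet> y" using Asym_dot[OF assms(1)] .
  have "(A *v (x+y)) \<bullet> (x+y) + (A *v (x-y)) \<bullet> (x-y) = 2 * ((A *v x) \<bullet> x) + 2 * ((A *v y) \<bullet> y)"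
    unfolding matrix_vector_right_distrib matrix_vector_mult_diff_distrib inner_add_left inner_add_right inner_diff_left inner_diff_right s by linarith
  moreover have "(A *v (x-y)) \<bullet> (x-y) \<ge> 0" using assms(2) by blast
  ultimately show ?thesis by linarith
qed

lemma Q_sum: fixes A :: "real^'n^'n" assumes "transpose A = A" "\<forall>v. (A *v v) \<bullet> v \<ge> 0"
  shows "(A *v (\<Sum>j<n. w j)) \<bullet> (\<Sum>j<n. w j) \<le> 2^n * (\<Sum>j<n. (A *v w j) \<bullet> w j)"
proof (induction n)
  case 0 then show ?case by simp
next
  case (Suc n)
  let ?Q = "\<lambda>v. (A *v v) \<bullet> v"
  have "?Q (\<Sum>j<Suc n. w j) = ?Q (w n + (\<Sum>j<n. w j))" by (simp add: add.commute)
  also have "\<dots> \<le> 2 * ?Q (w n) + 2 * ?Q (\<Sum>j<n. w j)" by (rule Q_add[OF assms])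
  also have "\<dots> \<le> 2 * ?Q (w n) + 2 * (2^n * (\<Sum>j<n. ?Q (w j)))" using Suc by simp
  also have "\<dots> \<le> 2^Suc n * ?Q (w n) + 2 * (2^n * (\<Sum>j<n. ?Q (w j)))"
  proof -
    have "(2::real) \<le> 2^Suc n" using one_le_power[of "2::real" n] by simp
    moreover have "?Q (w n) \<ge> 0" using assms(2) by blast
    ultimately show ?thesis by (simp add: mult_right_mono)
  qed
  also have "\<dots> = 2^Suc n * (\<Sum>j<Suc n. ?Q (w j))" by (simp add: algebra_simps)
  finally show ?case .
qed



theorem mainTheorem12:
  fixes d L :: nat and m :: "nat \<Rightarrow> nat"
    and A :: "real^'n^'n" and b :: "real^'n"
    and P :: "nat \<Rightarrow> 'b::euclidean_space set"
    and U :: "(nat \<Rightarrow> 'b) \<Rightarrow> real^'n"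
    and p :: "nat \<Rightarrow> nat \<Rightarrow> 'b"
  assumes dims: "d \<ge> 1" "CARD('n) = (\<Prod>\<nu>\<in>{1..d}. m \<nu>)" "\<forall>\<nu>\<in>{1..d}. m \<nu> \<ge> 1"
    and Ld: "L \<ge> d"
    and Asym: "transpose A = A"
    and Apos: "\<forall>v. v \<noteq> 0 \<longrightarrow> (A *v v) \<bullet> v > 0"
    and bnz: "b \<noteq> 0"
    and Psub: "\<forall>\<mu>\<in>{1..L}. subspace (P \<mu>)"
    and Umult: "multilinear_on L P U"
    and init: "in_params L P (p 1)"
    and step: "\<forall>k\<ge>1. \<forall>\<mu>\<in>{1..L}.
        min_norm_minimiser (\<lambda>q. fobj A b (U (als_arg (p (Suc k)) (p k) \<mu> q))) (P \<mu>) (p (Suc k) \<mu>)"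
  shows "(\<lambda>k. normA A (U (p (Suc k)) - U (p k))) \<longlonglongrightarrow> 0"
proof -
  define Q where "Q v = (A *v v) \<bullet> v" for v
  define c where "c = (1/(norm b)^2)/2"
  have cpos: "c > 0" using bnz by (simp add: c_def)
  have Qnn: "\<forall>v. (A *v v) \<bullet> v \<ge> 0"
  proof
    fix v show "(A *v v) \<bullet> v \<ge> 0" using Apos by (cases "v = 0") (auto intro: less_imp_le)
  qed
  define F where "F k = fobj A b (U (p k))" for k
  define z where "z k j = U (\<lambda>\<nu>. if \<nu> \<le> j then p (Suc k) \<nu> else p k \<nu>)" for k j
  define S where "S k = (\<Sum>j<L. Q (z k j - z k (Suc j)))" for k
  have Snn: "S k \<ge> 0" for k unfolding S_def Q_def using Qnn by (simp add: sum_nonneg)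
  have pin: "in_params L P (p k)" if kge: "k \<ge> 1" for k
  proof (cases "k = 1")
    case True then show ?thesis using init by simp
  next
    case False
    then obtain k' where k': "k = Suc k'" "k' \<ge> 1" using kge False by (cases k) auto
    show ?thesis unfolding in_params_def k'
      using step k'(2) unfolding min_norm_minimiser_def by blast
  qed
  have loc: "U q = U q'" if "\<forall>\<nu>\<in>{1..L}. q \<nu> = q' \<nu>" for q q'
    using Umult that unfolding multilinear_on_def by blast
  have z0: "z k 0 = U (p k)" for k unfolding z_def by (rule loc) auto
  have zL: "z k L = U (p (Suc k))" for k unfolding z_def by (rule loc) auto
  have Fstep: "F k = F (Suc k) + c * S k" if k: "k \<ge> 1" for k
  proof -
    have mic: "fobj A b (z k j) = fobj A b (z k (Suc j)) + c * Q (z k j - z k (Suc j))" if j: "j < L" for j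
    proof -
      have mu: "Suc j \<in> {1..L}" using j by simp
      have e1: "als_arg (p (Suc k)) (p k) (Suc j) (p k (Suc j)) = (\<lambda>\<nu>. if \<nu> \<le> j then p (Suc k) \<nu> else p k \<nu>)"
        by (auto simp: als_arg_def fun_eq_iff)
      have e2: "als_arg (p (Suc k)) (p k) (Suc j) (p (Suc k) (Suc j)) = (\<lambda>\<nu>. if \<nu> \<le> Suc j then p (Suc k) \<nu> else p k \<nu>)"
        by (auto simp: als_arg_def fun_eq_iff)
      have mn: "min_norm_minimiser (\<lambda>q. fobj A b (U (als_arg (p (Suc k)) (p k) (Suc j) q))) (P (Suc j)) (p (Suc k) (Suc j))"
        using step k mu by blast
      show ?thesis
        using micro[OF Asym Qnn Psub Umult mu pin[of "Suc k"] pin[OF k] mn] k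
        unfolding e1 e2 z_def[symmetric] Q_def c_def by simp
    qed
    have "F k - F (Suc k) = (\<Sum>j<L. fobj A b (z k j) - fobj A b (z k (Suc j)))"
      using sum_lessThan_telescope'[of "\<lambda>j. fobj A b (z k j)" L] z0 zL unfolding F_def by simp
    also have "\<dots> = (\<Sum>j<L. c * Q (z k j - z k (Suc j)))" using mic by (intro sum.cong) auto
    also have "\<dots> = c * S k" unfolding S_def by (simp add: sum_distrib_left)
    finally show ?thesis by simp
  qed
  obtain vs where vs: "A *v vs = b" using A_surj[OF Apos] by blast
  have Flow: "F k \<ge> fobj A b vs" for k
  proof -
    have "fobj A b (vs + 1 *\<^sub>R (U (p k) - vs)) = fobj A b vs + 1 * ((1/(norm b)^2) * ((A *v vs) \<bullet> (U (p k) - vs) - b \<bullet> (U (p k) - vs)))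
     + 1^2 * ((1/(norm b)^2)/2 * ((A *v (U (p k) - vs)) \<bullet> (U (p k) - vs)))"
      by (rule fobj_expand[OF Asym])
    then have "F k = fobj A b vs + c * Q (U (p k) - vs)" unfolding F_def Q_def c_def vs by simp
    moreover have "c * Q (U (p k) - vs) \<ge> 0" using cpos Qnn unfolding Q_def by simp
    ultimately show ?thesis by linarith
  qed
  have psum: "(\<Sum>i<n. S (Suc i)) \<le> (F 1 - fobj A b vs) / c" for n
  proof -
    have "c * (\<Sum>i<n. S (Suc i)) = F 1 - F (Suc n)"
    proof (induction n)
      case 0 then show ?case by simp
    next
      case (Suc n)
      have "c * (\<Sum>i<Suc n. S (Suc i)) = c * (\<Sum>i<n. S (Suc i)) + c * S (Suc n)" by (simp add: algebra_simps)
      also have "\<dots> = F 1 - F (Suc (Suc n))" using Suc Fstep[of "Suc n"] by simp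
      finally show ?case .
    qed
    then have "c * (\<Sum>i<n. S (Suc i)) \<le> F 1 - fobj A b vs" using Flow[of "Suc n"] by linarith
    then show ?thesis using cpos by (simp add: field_simps)
  qed
  have "summable (\<lambda>i. S (Suc i))"
    by (rule summableI_nonneg_bounded[OF Snn psum])
  then have "(\<lambda>i. S (Suc i)) \<longlonglongrightarrow> 0" by (rule summable_LIMSEQ_zero)
  then have S0: "S \<longlonglongrightarrow> 0" by (rule LIMSEQ_imp_Suc)
  have bnd: "(A *v (U (p (Suc k)) - U (p k))) \<bullet> (U (p (Suc k)) - U (p k)) \<le> 2^L * S k" for k
  proof -
    have "U (p k) - U (p (Suc k)) = (\<Sum>j<L. z k j - z k (Suc j))"
      using sum_lessThan_telescope'[of "\<lambda>j. z k j" L] z0 zL by simp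
    then have "U (p (Suc k)) - U (p k) = - (\<Sum>j<L. z k j - z k (Suc j))" by (simp add: algebra_simps)
    then have "(A *v (U (p (Suc k)) - U (p k))) \<bullet> (U (p (Suc k)) - U (p k))
        = (A *v (\<Sum>j<L. z k j - z k (Suc j))) \<bullet> (\<Sum>j<L. z k j - z k (Suc j))"
      using Q_neg by simp
    also have "\<dots> \<le> 2^L * S k" unfolding S_def Q_def by (rule Q_sum[OF Asym Qnn])
    finally show ?thesis .
  qed
  have lim: "(\<lambda>k. sqrt (2^L * S k)) \<longlonglongrightarrow> 0"
    using tendsto_real_sqrt[OF tendsto_mult[OF tendsto_const S0, of "2^L"]] by simp
  show ?thesis
  proof (rule tendsto_sandwich[OF _ _ tendsto_const lim])
    show "\<forall>\<^sub>F k in sequentially. 0 \<le> normA A (U (p (Suc k)) - U (p k))"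
      unfolding normA_def using Qnn by simp
    show "\<forall>\<^sub>F k in sequentially. normA A (U (p (Suc k)) - U (p k)) \<le> sqrt (2^L * S k)"
      unfolding normA_def using bnd by (simp add: real_sqrt_le_mono)
  qed
qed
end
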